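(* Let $T=(V,E)$ be an $X$-tree and $f$ an interior edge of $T$. For each basis $B$ of $\mathbb{M}(T/f)$ and each cord $xy\in\binom{X}{2}$, let $\rho_{xy}\in\mathbb{R}^B$ be the unique map with $\lambda^{T/f}_{xy}=\sum_{b\in B}\rho_{xy}(b)\lambda^{T/f}_b$. Then the set $\mathbb{B}(T)$ of bases of $\mathbb{M}(T)$ equals $$\Big\{\{xy\}\cup B:\ xy\in\tbinom{X}{2},\ B\in\mathbb{B}(T/f),\ \sum_{b\in B}\rho_{xy}(b)\,\delta_{f|b}\neq\delta_{f|xy}\Big\},$$ where for a cord $zz'$, $\delta_{f|zz'}=1$ if $f\in E(z|z')$ and $\delta_{f|zz'}=0$ otherwise.
   Context: Let $X$ be a finite set with $|X|=n\ge 3$. An $X$-tree is a finite tree $T=(V,E)$ whose set of degree-1 vertices is exactly $X$ and which has no vertices of degree $2$; interior edges are edges not containing a leaf. A cord is a $2$-subset $\{x,y\}$ of $X$, written $xy$. $E(u|v)$ is the set of edges on the path from $u$ to $v$ in $T$. For each cord $xy$, $\lambda^T_{xy}:\mathbb{R}^E\to\mathbb{R}$, $\omega\mapsto\sum_{e\in E(x|y)}\omega(e)$. $\mathbb{M}(T)$ is the matroid on ground set $\binom{X}{2}$ represented over $\mathbb{R}$ by $xy\mapsto\lambda^T_{xy}$ (rank function $\mathrm{rk}^T(\mathcal{L})=\dim\mathrm{span}\{\lambda^T_{xy}:xy\in\mathcal{L}\}$); its rank is $|E|$ and $\mathbb{B}(T)$ denotes its set of bases. $T/f$ is the $X$-tree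 obtained by contracting the edge $f$, with edge set identified with $E-\{f\}$ and paths inherited from $T$. *)

theory Defs
  imports Complex_Main "HOL-Library.FuncSet"
begin

definition is_path :: "'v set set \<Rightarrow> 'v list \<Rightarrow> 'v \<Rightarrow> 'v \<Rightarrow> bool" where
  "is_path E p u v \<longleftrightarrow> p \<noteq> [] \<and> hd p = u \<and> last p = v \<and> distinct p \<and>
     (\<forall>i. Suc i < length p \<longrightarrow> {p ! i, p ! Suc i} \<in> E)"

definition path_edges :: "'v list \<Rightarrow> 'v set set" where
  "path_edges p = {{p ! i, p ! Suc i} | i. Suc i < length p}"

definition is_tree :: "'v set \<Rightarrow> 'v set set \<Rightarrow> bool" where
  "is_tree V E \<longleftrightarrow> finite V \<and> V \<noteq> {} \<and>
     (\<forall>e\<in>E. \<exists>u v. u \<noteq> v \<and> u \<in> V \<and> v \<in> V \<and> e = {u, v}) \<and>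
     (\<forall>u\<in>V. \<forall>v\<in>V. \<exists>!p. is_path E p u v)"

definition degree :: "'v set set \<Rightarrow> 'v \<Rightarrow> nat" where
  "degree E v = card {e \<in> E. v \<in> e}"

definition is_X_tree :: "'v set \<Rightarrow> 'v set \<Rightarrow> 'v set set \<Rightarrow> bool" where
  "is_X_tree X V E \<longleftrightarrow> is_tree V E \<and> {v \<in> V. degree E v = 1} = X \<and>
     (\<forall>v\<in>V. degree E v \<noteq> 2)"

definition interior_edge :: "'v set \<Rightarrow> 'v set set \<Rightarrow> 'v set \<Rightarrow> bool" where
  "interior_edge X E f \<longleftrightarrow> f \<in> E \<and> f \<inter> X = {}"

definition E_path :: "'v set set \<Rightarrow> 'v \<Rightarrow> 'v \<Rightarrow> 'v set set" where
  "E_path E u v = path_edges (THE p. is_path E p u v)"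

definition cords :: "'v set \<Rightarrow> 'v set set" where
  "cords X = {c. c \<subseteq> X \<and> card c = 2}"

definition cord_path :: "'v set set \<Rightarrow> 'v set \<Rightarrow> 'v set set" where
  "cord_path E c = \<Union>{E_path E x y | x y. c = {x, y}}"

text \<open>Paths in the contraction T/f (edge set E - {f}, paths inherited from T).\<close>
definition cord_path_contr :: "'v set set \<Rightarrow> 'v set \<Rightarrow> 'v set \<Rightarrow> 'v set set" where
  "cord_path_contr E f c = cord_path E c - {f}"

definition lam :: "('v set \<Rightarrow> 'v set set) \<Rightarrow> 'v set \<Rightarrow> ('v set \<Rightarrow> real) \<Rightarrow> real" where
  "lam P c \<omega> = (\<Sum>e\<in>P c. \<omega> e)"

definition indep :: "('v set \<Rightarrow> 'v set set) \<Rightarrow> 'v set set \<Rightarrow> bool" where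
  "indep P L \<longleftrightarrow> finite L \<and>
     (\<forall>a :: 'v set \<Rightarrow> real. (\<forall>\<omega>. (\<Sum>l\<in>L. a l * lam P l \<omega>) = 0) \<longrightarrow> (\<forall>l\<in>L. a l = 0))"

definition bases :: "'v set \<Rightarrow> ('v set \<Rightarrow> 'v set set) \<Rightarrow> 'v set set set" where
  "bases X P = {B. B \<subseteq> cords X \<and> indep P B \<and>
     (\<forall>B'. B \<subseteq> B' \<and> B' \<subseteq> cords X \<and> indep P B' \<longrightarrow> B' = B)}"

definition rho :: "'v set set \<Rightarrow> 'v set \<Rightarrow> 'v set set \<Rightarrow> 'v set \<Rightarrow> ('v set \<Rightarrow> real)" where
  "rho E f B c = (THE r. r \<in> extensional B \<and>
     (\<forall>\<omega>. lam (cord_path_contr E f) c \<omega> = (\<Sum>b\<in>B. r b * lam (cord_path_contr E f) b \<omega>)))"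

definition delta :: "'v set set \<Rightarrow> 'v set \<Rightarrow> 'v set \<Rightarrow> real" where
  "delta E f c = (if f \<in> cord_path E c then 1 else 0)"

end

theory Submission
  imports Defs "HOL-Library.Function_Algebras"
begin

definition sc :: "real \<Rightarrow> ('a \<Rightarrow> real) \<Rightarrow> ('a \<Rightarrow> real)" where
  "sc r g = (\<lambda>x. r * g x)"

global_interpretation FV: vector_space sc
  by unfold_locales (auto simp: sc_def fun_eq_iff algebra_simps)

lemma sum_fun_apply: "(sum g B) x = (\<Sum>b\<in>B. g b x)"
  by (induction B rule: infinite_finite_induct) auto

lemma sc_apply: "sc r g x = r * g x" by (simp add: sc_def)


definition findep :: "('c \<Rightarrow> 'e \<Rightarrow> real) \<Rightarrow> 'c set \<Rightarrow> bool" where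
  "findep v L \<longleftrightarrow> finite L \<and> (\<forall>a. (\<Sum>l\<in>L. sc (a l) (v l)) = 0 \<longrightarrow> (\<forall>l\<in>L. a l = 0))"

lemma findep_iff:
  "findep v L \<longleftrightarrow> finite L \<and> inj_on v L \<and> FV.independent (v ` L)"
proof
  assume h: "findep v L"
  hence fin: "finite L" and z: "\<And>a. (\<Sum>l\<in>L. sc (a l) (v l)) = 0 \<Longrightarrow> \<forall>l\<in>L. a l = 0"
    by (auto simp: findep_def)
  have inj: "inj_on v L"
  proof (rule inj_onI, rule ccontr)
    fix x y assume xy: "x \<in> L" "y \<in> L" "v x = v y" "x \<noteq> y"
    define a where "a = (\<lambda>l. if l = x then (1::real) else if l = y then -1 else 0)"
    have "(\<Sum>l\<in>L. sc (a l) (v l)) = (\<Sum>l\<in>{x,y}. sc (a l) (v l))"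
      by (rule sum.mono_neutral_right) (use fin xy in \<open>auto simp: a_def sc_def fun_eq_iff\<close>)
    also have "\<dots> = 0" using xy by (auto simp: a_def sc_def fun_eq_iff)
    finally have "\<forall>l\<in>L. a l = 0" by (rule z)
    with xy show False by (auto simp: a_def)
  qed
  have "FV.independent (v ` L)"
  proof (rule FV.independent_if_scalars_zero)
    show "finite (v ` L)" using fin by simp
    fix g x assume s: "(\<Sum>x\<in>v ` L. sc (g x) x) = 0" and x: "x \<in> v ` L"
    have "(\<Sum>l\<in>L. sc (g (v l)) (v l)) = 0" using s by (simp add: sum.reindex[OF inj])
    hence "\<forall>l\<in>L. g (v l) = 0" by (rule z)
    with x show "g x = 0" by auto
  qed
  with fin inj show "finite L \<and> inj_on v L \<and> FV.independent (v ` L)" by simp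
next
  assume h: "finite L \<and> inj_on v L \<and> FV.independent (v ` L)"
  hence fin: "finite L" and inj: "inj_on v L" and ind: "FV.independent (v ` L)" by auto
  show "findep v L" unfolding findep_def
  proof (intro conjI allI impI ballI)
    show "finite L" by fact
    fix a l assume s: "(\<Sum>l\<in>L. sc (a l) (v l)) = 0" and l: "l \<in> L"
    define g where "g = (\<lambda>x. a (the_inv_into L v x))"
    have "(\<Sum>x\<in>v ` L. sc (g x) x) = (\<Sum>l\<in>L. sc (g (v l)) (v l))"
      by (simp add: sum.reindex[OF inj])
    also have "\<dots> = (\<Sum>l\<in>L. sc (a l) (v l))"
      by (rule sum.cong) (auto simp: g_def the_inv_into_f_f[OF inj])
    finally have "(\<Sum>x\<in>v ` L. sc (g x) x) = 0" using s by simp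
    hence "g (v l) = 0" using ind fin l by (auto simp: FV.dependent_finite)
    thus "a l = 0" by (simp add: g_def the_inv_into_f_f[OF inj l])
  qed
qed

lemma span_image_sum:
  assumes "finite B" "y \<in> FV.span (g ` B)"
  shows "\<exists>r. y = (\<Sum>b\<in>B. sc (r b) (g b))"
  using assms(2)
proof (induction rule: FV.span_induct_alt)
  case base
  show ?case by (rule exI[of _ "\<lambda>_. 0"]) (simp add: sc_def fun_eq_iff zero_fun_def)
next
  case (step c x y)
  then obtain r where r: "y = (\<Sum>b\<in>B. sc (r b) (g b))" by blast
  from step obtain b0 where b0: "b0 \<in> B" "x = g b0" by blast
  define r' where "r' = (\<lambda>b. r b + (if b = b0 then c else 0))"
  have "(\<Sum>b\<in>B. sc (r' b) (g b)) = (\<Sum>b\<in>B. sc (r b) (g b)) + (\<Sum>b\<in>B. sc (if b = b0 then c else 0) (g b))"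
    by (simp add: r'_def sc_def fun_eq_iff sum.distrib distrib_right sum_fun_apply)
  also have "(\<Sum>b\<in>B. sc (if b = b0 then c else 0) (g b)) = sc c x"
  proof -
    have "\<And>z. (\<Sum>b\<in>B. (if b = b0 then c else 0) * g b z) = (\<Sum>b\<in>B. if b = b0 then c * g b z else 0)"
      by (rule sum.cong) auto
    thus ?thesis using b0 assms(1) by (simp add: fun_eq_iff sum_fun_apply sc_def)
  qed
  finally have "(\<Sum>b\<in>B. sc (r' b) (g b)) = y + sc c x" using r by (simp add: sc_def fun_eq_iff sum_fun_apply)
  thus ?case by (intro exI[of _ r']) (metis add.commute)
qed

lemma sum_sc_span: "(\<And>b. b \<in> B \<Longrightarrow> g b \<in> FV.span S) \<Longrightarrow> (\<Sum>b\<in>B. sc (r b) (g b)) \<in> FV.span S"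
  by (intro FV.span_sum FV.span_scale) auto


definition prj :: "'e \<Rightarrow> ('e \<Rightarrow> real) \<Rightarrow> ('e \<Rightarrow> real)" where
  "prj f0 x = x(f0 := 0)"

definition ue :: "'e \<Rightarrow> ('e \<Rightarrow> real)" where
  "ue f0 = (\<lambda>x. if x = f0 then 1 else 0)"

definition isbasis :: "('c \<Rightarrow> 'e \<Rightarrow> real) \<Rightarrow> 'c set \<Rightarrow> 'c set \<Rightarrow> bool" where
  "isbasis v C A \<longleftrightarrow> A \<subseteq> C \<and> findep v A \<and> (\<forall>A'. A \<subseteq> A' \<and> A' \<subseteq> C \<and> findep v A' \<longrightarrow> A' = A)"

definition rhoA :: "('c \<Rightarrow> 'e \<Rightarrow> real) \<Rightarrow> 'c set \<Rightarrow> 'c \<Rightarrow> ('c \<Rightarrow> real)" where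
  "rhoA v B c = (THE r. r \<in> extensional B \<and> v c = (\<Sum>b\<in>B. sc (r b) (v b)))"

lemma prj_sum: "prj f0 (\<Sum>b\<in>B. sc (r b) (g b)) = (\<Sum>b\<in>B. sc (r b) (prj f0 (g b)))"
  by (auto simp: prj_def fun_eq_iff sum_fun_apply sc_apply)

lemma span_prj:
  assumes "x \<in> FV.span (vT ` K)"
  shows "prj f0 x \<in> FV.span ((\<lambda>c. prj f0 (vT c)) ` K)"
  using assms
proof (induction rule: FV.span_induct_alt)
  case base
  have "prj f0 0 = 0" by (simp add: prj_def fun_eq_iff)
  thus ?case using FV.span_zero by metis
next
  case (step c x y)
  have "prj f0 (sc c x + y) = sc c (prj f0 x) + prj f0 y" by (simp add: prj_def fun_eq_iff sc_apply)
  moreover have "prj f0 x \<in> (\<lambda>c. prj f0 (vT c)) ` K" using step by auto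
  hence "sc c (prj f0 x) \<in> FV.span ((\<lambda>c. prj f0 (vT c)) ` K)"
    by (intro FV.span_scale FV.span_base)
  ultimately show ?case using step FV.span_add by metis
qed

lemma findep_diff:
  assumes "findep v B" "(\<Sum>b\<in>B. sc (r b) (v b)) = (\<Sum>b\<in>B. sc (s b) (v b))"
  shows "\<forall>b\<in>B. r b = s b"
proof -
  have "(\<Sum>b\<in>B. sc (r b - s b) (v b)) = (\<Sum>b\<in>B. sc (r b) (v b)) - (\<Sum>b\<in>B. sc (s b) (v b))"
    by (simp add: fun_eq_iff sum_fun_apply sc_def left_diff_distrib sum_subtractf)
  also have "\<dots> = 0" using assms(2) by simp
  finally show ?thesis using assms(1) unfolding findep_def by fastforce
qed

lemma rhoA_eq:
  assumes "findep v B" "v c = (\<Sum>b\<in>B. sc (r b) (v b))"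
  shows "rhoA v B c = restrict r B"
  unfolding rhoA_def
proof (rule the_equality)
  have "(\<Sum>b\<in>B. sc (restrict r B b) (v b)) = (\<Sum>b\<in>B. sc (r b) (v b))"
    by (rule sum.cong) auto
  thus "restrict r B \<in> extensional B \<and> v c = (\<Sum>b\<in>B. sc (restrict r B b) (v b))"
    using assms(2) by simp
next
  fix r' assume h: "r' \<in> extensional B \<and> v c = (\<Sum>b\<in>B. sc (r' b) (v b))"
  hence "(\<Sum>b\<in>B. sc (r' b) (v b)) = (\<Sum>b\<in>B. sc (r b) (v b))" using assms(2) by (metis (no_types))
  hence "\<forall>b\<in>B. r' b = r b" by (rule findep_diff[OF assms(1)])
  with h show "r' = restrict r B" by (auto simp: fun_eq_iff extensional_def)
qed

lemma maxspan:
  assumes "isbasis v C A"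
  shows "v ` C \<subseteq> FV.span (v ` A)"
proof
  fix y assume "y \<in> v ` C"
  then obtain c where c: "c \<in> C" "y = v c" by auto
  show "y \<in> FV.span (v ` A)"
  proof (rule ccontr)
    assume ns: "y \<notin> FV.span (v ` A)"
    have A: "A \<subseteq> C" "finite A" "inj_on v A" "FV.independent (v ` A)"
      using assms by (auto simp: isbasis_def findep_iff)
    have "v c \<notin> v ` A" using ns c FV.span_base by blast
    hence cA: "c \<notin> A" by auto
    have "FV.independent (insert (v c) (v ` A))"
      using ns c A(4) by (intro FV.independent_insertI) auto
    hence "findep v (insert c A)"
      unfolding findep_iff using A \<open>v c \<notin> v ` A\<close> by auto
    hence "insert c A = A" using assms c A unfolding isbasis_def by blast
    with cA show False by auto
  qed
qed

lemma decompose: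
  fixes vT :: "'c \<Rightarrow> 'e \<Rightarrow> real"
  assumes fin: "finite B"
    and sp: "(\<lambda>c. prj f0 (vT c)) ` C \<subseteq> FV.span ((\<lambda>c. prj f0 (vT c)) ` B)"
    and x: "x \<in> FV.span (vT ` C)"
  shows "x \<in> FV.span (insert (ue f0) (vT ` B))"
proof -
  have "prj f0 x \<in> FV.span ((\<lambda>c. prj f0 (vT c)) ` C)" by (rule span_prj[OF x])
  also have "\<dots> \<subseteq> FV.span ((\<lambda>c. prj f0 (vT c)) ` B)"
    by (rule FV.span_minimal[OF sp]) simp
  finally obtain r where r: "prj f0 x = (\<Sum>b\<in>B. sc (r b) (prj f0 (vT b)))"
    using span_image_sum[OF fin] by blast
  define z where "z = x - (\<Sum>b\<in>B. sc (r b) (vT b))"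
  have "z = sc (z f0) (ue f0)"
  proof
    fix e show "z e = sc (z f0) (ue f0) e"
    proof (cases "e = f0")
      case True thus ?thesis by (simp add: ue_def sc_apply)
    next
      case False
      have "prj f0 x e = (\<Sum>b\<in>B. sc (r b) (prj f0 (vT b))) e" using r by simp
      hence "x e = (\<Sum>b\<in>B. r b * vT b e)" using False by (simp add: prj_def sum_fun_apply sc_apply)
      thus ?thesis using False by (simp add: z_def ue_def sum_fun_apply sc_apply)
    qed
  qed
  hence "x = sc (z f0) (ue f0) + (\<Sum>b\<in>B. sc (r b) (vT b))" by (metis z_def diff_add_cancel)
  moreover have "sc (z f0) (ue f0) \<in> FV.span (insert (ue f0) (vT ` B))"
    by (intro FV.span_scale FV.span_base) simp
  moreover have "(\<Sum>b\<in>B. sc (r b) (vT b)) \<in> FV.span (insert (ue f0) (vT ` B))"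
    by (intro sum_sc_span FV.span_base) auto
  ultimately show ?thesis by (metis FV.span_add)
qed


lemma findep_image_card: "findep v A \<Longrightarrow> card (v ` A) = card A"
  by (simp add: findep_iff card_image)

lemma abstract_main:
  fixes vT :: "'c \<Rightarrow> 'e \<Rightarrow> real" and C :: "'c set" and f0 :: 'e
  defines "vF \<equiv> (\<lambda>c. prj f0 (vT c))"
  assumes finC: "finite C" and uf: "ue f0 \<in> FV.span (vT ` C)"
  shows "{A. isbasis vT C A} =
    {insert c B | c B. c \<in> C \<and> isbasis vF C B \<and> (\<Sum>b\<in>B. rhoA vF B c b * vT b f0) \<noteq> vT c f0}"
proof (intro equalityI subsetI)
  fix A assume "A \<in> {A. isbasis vT C A}"
  hence bA: "isbasis vT C A" by simp
  hence AC: "A \<subseteq> C" and fiA: "findep vT A" by (auto simp: isbasis_def)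
  hence finA: "finite A" and injA: "inj_on vT A" and indA: "FV.independent (vT ` A)"
    by (auto simp: findep_iff)
  have spA: "vT ` C \<subseteq> FV.span (vT ` A)" by (rule maxspan[OF bA])
  hence spA': "FV.span (vT ` C) \<subseteq> FV.span (vT ` A)" by (rule FV.span_minimal) simp
  have "vF ` C \<subseteq> FV.span (vF ` A)"
  proof
    fix y assume "y \<in> vF ` C"
    then obtain c where c: "c \<in> C" "y = vF c" by auto
    have "vT c \<in> FV.span (vT ` A)" using spA c by auto
    from span_prj[OF this, of f0] show "y \<in> FV.span (vF ` A)" using c by (simp add: vF_def)
  qed
  obtain B0 where B0: "B0 \<subseteq> vF ` A" "FV.independent B0" "vF ` A \<subseteq> FV.span B0"
    by (rule FV.maximal_independent_subset)
  obtain B where BA: "B \<subseteq> A" and injB: "inj_on vF B" and vFB': "B0 = vF ` B"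
    using B0(1) subset_image_inj by metis
  have vFB: "vF ` B = B0" using vFB' by simp
  have finB: "finite B" using BA finA finite_subset by auto
  have fiB: "findep vF B" using finB injB vFB B0(2) by (simp add: findep_iff)
  have spB: "vF ` C \<subseteq> FV.span (vF ` B)"
    using \<open>vF ` C \<subseteq> FV.span (vF ` A)\<close> FV.span_minimal[OF B0(3)] vFB by auto
  have BneA: "B \<noteq> A"
  proof
    assume BA': "B = A"
    have "ue f0 \<in> FV.span (vT ` A)" using uf spA' by auto
    then obtain r where r: "ue f0 = (\<Sum>b\<in>A. sc (r b) (vT b))" using span_image_sum[OF finA] by blast
    have "prj f0 (ue f0) = (\<Sum>b\<in>A. sc (r b) (vF b))" unfolding vF_def
      by (subst r) (rule prj_sum)
    moreover have "prj f0 (ue f0) = (\<Sum>b\<in>A. sc 0 (vF b))"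
      by (simp add: prj_def ue_def fun_eq_iff sum_fun_apply sc_apply)
    ultimately have "(\<Sum>b\<in>A. sc (r b) (vF b)) = (\<Sum>b\<in>A. sc 0 (vF b))" by simp
    hence r0: "\<forall>b\<in>A. r b = 0" using findep_diff[of vF A r "\<lambda>_. 0"] fiB BA' by blast
    have "ue f0 f0 = (\<Sum>b\<in>A. r b * vT b f0)" using r by (simp add: sum_fun_apply sc_apply)
    also have "\<dots> = 0" using r0 by simp
    finally show False by (simp add: ue_def)
  qed
  have "vT ` A \<subseteq> FV.span (insert (ue f0) (vT ` B))"
  proof
    fix x assume "x \<in> vT ` A"
    hence "x \<in> FV.span (vT ` C)" using AC by (auto intro: FV.span_base)
    thus "x \<in> FV.span (insert (ue f0) (vT ` B))"
      by (rule decompose[OF finB spB[unfolded vF_def]])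
  qed
  from FV.independent_span_bound[OF _ indA this] finB
  have "card (vT ` A) \<le> card (insert (ue f0) (vT ` B))" by simp
  also have "\<dots> \<le> card (vT ` B) + 1" by (simp add: card_insert_if finB)
  also have "\<dots> \<le> card B + 1" using card_image_le[OF finB] by simp
  finally have cardA: "card A \<le> card B + 1" using findep_image_card[OF fiA] by simp
  have "card (A - B) = card A - card B" using BA finB by (simp add: card_Diff_subset)
  moreover have "A - B \<noteq> {}" using BA BneA by auto
  moreover have "finite (A - B)" using finA by simp
  ultimately have "card (A - B) = 1" using cardA card_gt_0_iff[of "A - B"] by linarith
  then obtain c where c: "A - B = {c}" by (rule card_1_singletonE)
  hence Aeq: "A = insert c B" and cB: "c \<notin> B" and cA: "c \<in> A" using BA by auto
  have bB: "isbasis vF C B"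
    unfolding isbasis_def
  proof (intro conjI allI impI)
    show "B \<subseteq> C" using BA AC by auto
    show "findep vF B" by fact
    fix B' assume h: "B \<subseteq> B' \<and> B' \<subseteq> C \<and> findep vF B'"
    hence "vF ` B' \<subseteq> FV.span (vF ` B)" using spB by auto
    from FV.independent_span_bound[OF _ _ this] h finB
    have "card (vF ` B') \<le> card (vF ` B)" by (auto simp: findep_iff)
    hence "card B' \<le> card B" using h findep_image_card[of vF B'] findep_image_card[OF fiB] by simp
    thus "B' = B" using h card_seteq[of B' B] by (simp add: findep_def)
  qed
  have "vF c \<in> FV.span (vF ` B)" using spB cA AC by auto
  then obtain r where r: "vF c = (\<Sum>b\<in>B. sc (r b) (vF b))" using span_image_sum[OF finB] by blast
  have rho: "rhoA vF B c = restrict r B" by (rule rhoA_eq[OF fiB r])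
  have cond: "(\<Sum>b\<in>B. rhoA vF B c b * vT b f0) \<noteq> vT c f0"
  proof
    assume eq: "(\<Sum>b\<in>B. rhoA vF B c b * vT b f0) = vT c f0"
    have "vT c = (\<Sum>b\<in>B. sc (r b) (vT b))"
    proof
      fix e show "vT c e = (\<Sum>b\<in>B. sc (r b) (vT b)) e"
      proof (cases "e = f0")
        case True
        have "(\<Sum>b\<in>B. rhoA vF B c b * vT b f0) = (\<Sum>b\<in>B. r b * vT b f0)"
          unfolding rho by (rule sum.cong) auto
        hence "vT c f0 = (\<Sum>b\<in>B. r b * vT b f0)" using eq by simp
        thus ?thesis using True by (simp add: sum_fun_apply sc_apply)
      next
        case False
        have "vF c e = (\<Sum>b\<in>B. sc (r b) (vF b)) e" using r by simp
        thus ?thesis using False by (simp add: vF_def prj_def sum_fun_apply sc_apply)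
      qed
    qed
    moreover have "(\<Sum>b\<in>B. sc (r b) (vT b)) \<in> FV.span (vT ` B)"
      by (rule sum_sc_span) (auto intro: FV.span_base)
    ultimately have "vT c \<in> FV.span (vT ` B)" by simp
    moreover have "FV.independent (insert (vT c) (vT ` B))" using indA Aeq by simp
    moreover have "vT c \<notin> vT ` B" using injA Aeq cB by (auto simp: inj_on_def)
    ultimately show False by (simp add: FV.independent_insert)
  qed
  show "A \<in> {insert c B | c B. c \<in> C \<and> isbasis vF C B \<and> (\<Sum>b\<in>B. rhoA vF B c b * vT b f0) \<noteq> vT c f0}"
    using Aeq cA AC bB cond by blast
next
  fix A assume "A \<in> {insert c B | c B. c \<in> C \<and> isbasis vF C B \<and> (\<Sum>b\<in>B. rhoA vF B c b * vT b f0) \<noteq> vT c f0}"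
  then obtain c B where Aeq: "A = insert c B" and cC: "c \<in> C" and bB: "isbasis vF C B"
    and cond: "(\<Sum>b\<in>B. rhoA vF B c b * vT b f0) \<noteq> vT c f0" by blast
  have BC: "B \<subseteq> C" and fiB: "findep vF B" using bB by (auto simp: isbasis_def)
  hence finB: "finite B" by (simp add: findep_def)
  have spB: "vF ` C \<subseteq> FV.span (vF ` B)" by (rule maxspan[OF bB])
  have "vF c \<in> FV.span (vF ` B)" using spB cC by auto
  then obtain r where r: "vF c = (\<Sum>b\<in>B. sc (r b) (vF b))" using span_image_sum[OF finB] by blast
  have rho: "rhoA vF B c = restrict r B" by (rule rhoA_eq[OF fiB r])
  have cond': "(\<Sum>b\<in>B. r b * vT b f0) \<noteq> vT c f0" using cond rho by simp
  have nsp: "vT c \<notin> FV.span (vT ` B)"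
  proof
    assume "vT c \<in> FV.span (vT ` B)"
    then obtain s where s: "vT c = (\<Sum>b\<in>B. sc (s b) (vT b))" using span_image_sum[OF finB] by blast
    have "vF c = (\<Sum>b\<in>B. sc (s b) (vF b))" unfolding vF_def s prj_sum ..
    hence "(\<Sum>b\<in>B. sc (s b) (vF b)) = (\<Sum>b\<in>B. sc (r b) (vF b))" using r by (metis (no_types))
    hence "\<forall>b\<in>B. s b = r b" by (rule findep_diff[OF fiB])
    moreover have "vT c f0 = (\<Sum>b\<in>B. s b * vT b f0)"
      by (subst s) (simp add: sum_fun_apply sc_apply)
    ultimately have "vT c f0 = (\<Sum>b\<in>B. r b * vT b f0)" by simp
    thus False using cond' by simp
  qed
  have fiBT: "findep vT B"
    unfolding findep_def
  proof (intro conjI allI impI)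
    show "finite B" by fact
    fix a assume "(\<Sum>l\<in>B. sc (a l) (vT l)) = 0"
    hence "prj f0 (\<Sum>l\<in>B. sc (a l) (vT l)) = prj f0 0" by simp
    hence "(\<Sum>l\<in>B. sc (a l) (vF l)) = (\<Sum>l\<in>B. sc 0 (vF l))"
      unfolding prj_sum vF_def by (simp add: prj_def fun_eq_iff sum_fun_apply sc_apply)
    thus "\<forall>l\<in>B. a l = 0" using findep_diff[OF fiB, of a "\<lambda>_. 0"] by simp
  qed
  have vcB: "vT c \<notin> vT ` B" using nsp FV.span_base[of "vT c" "vT ` B"] by auto
  have cB: "c \<notin> B" using vcB by auto
  have fiA: "findep vT A"
  proof -
    have "FV.independent (insert (vT c) (vT ` B))"
      using fiBT nsp by (intro FV.independent_insertI) (auto simp: findep_iff)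
    thus ?thesis using fiBT vcB Aeq by (auto simp: findep_iff)
  qed
  have AC: "A \<subseteq> C" using Aeq cC BC by auto
  have cardA: "card A = card B + 1" using Aeq cB finB by simp
  have "isbasis vT C A"
    unfolding isbasis_def
  proof (intro conjI allI impI)
    show "A \<subseteq> C" "findep vT A" by fact+
    fix A' assume h: "A \<subseteq> A' \<and> A' \<subseteq> C \<and> findep vT A'"
    have "vT ` A' \<subseteq> FV.span (insert (ue f0) (vT ` B))"
    proof
      fix x assume "x \<in> vT ` A'"
      hence "x \<in> FV.span (vT ` C)" using h by (auto intro: FV.span_base)
      thus "x \<in> FV.span (insert (ue f0) (vT ` B))"
        by (rule decompose[OF finB spB[unfolded vF_def]])
    qed
    from FV.independent_span_bound[OF _ _ this] h finB
    have "card (vT ` A') \<le> card (insert (ue f0) (vT ` B))" by (auto simp: findep_iff)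
    also have "\<dots> \<le> card (vT ` B) + 1" by (simp add: card_insert_if finB)
    also have "\<dots> \<le> card B + 1" using card_image_le[OF finB] by simp
    finally have "card A' \<le> card A" using findep_image_card[of vT A'] h cardA by simp
    thus "A' = A" using h card_seteq[of A' A] by (simp add: findep_def)
  qed
  thus "A \<in> {A. isbasis vT C A}" by simp
qed


definition conn :: "'v set set \<Rightarrow> 'v \<Rightarrow> 'v \<Rightarrow> bool" where
  "conn G = (\<lambda>x y. {x, y} \<in> G)\<^sup>*\<^sup>*"

lemma conn_refl[simp]: "conn G x x"
  by (simp add: conn_def)

lemma conn_step: "{x, y} \<in> G \<Longrightarrow> conn G x y"
  unfolding conn_def by (rule r_into_rtranclp)

lemma conn_trans: "conn G x y \<Longrightarrow> conn G y z \<Longrightarrow> conn G x z"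
  unfolding conn_def by (rule rtranclp_trans)

lemma conn_sym: "conn G x y \<Longrightarrow> conn G y x"
  unfolding conn_def
proof (induction rule: rtranclp_induct)
  case base thus ?case by simp
next
  case (step y z)
  have "{z, y} \<in> G" using step(2) by (simp add: insert_commute)
  thus ?case using step(3) by (rule converse_rtranclp_into_rtranclp)
qed

lemma conn_mono: "G \<subseteq> G' \<Longrightarrow> conn G x y \<Longrightarrow> conn G' x y"
  unfolding conn_def by (erule rtranclp_mono[THEN predicate2D, rotated]) auto

lemma is_path_single: "is_path G [u] u u"
  by (simp add: is_path_def)

lemma is_path_take:
  assumes "is_path G p u w" "i < length p"
  shows "is_path G (take (Suc i) p) u (p ! i)"
proof -
  have ne: "take (Suc i) p \<noteq> []" using assms(2) by (cases p) auto
  have "hd (take (Suc i) p) = hd p" using assms(2) by (cases p) auto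
  moreover have "last (take (Suc i) p) = p ! i"
    using assms(2) ne by (auto simp: last_conv_nth min_def intro: arg_cong[where f="nth p"])
  moreover have "distinct (take (Suc i) p)" using assms(1) by (simp add: is_path_def)
  moreover have "\<forall>j. Suc j < length (take (Suc i) p) \<longrightarrow> {take (Suc i) p ! j, take (Suc i) p ! Suc j} \<in> G"
    using assms by (auto simp: is_path_def)
  ultimately show ?thesis using assms ne by (simp add: is_path_def)
qed

lemma is_path_snoc:
  assumes "is_path G p u w" "v \<notin> set p" "{w, v} \<in> G"
  shows "is_path G (p @ [v]) u v"
  using assms unfolding is_path_def
proof (intro conjI allI impI)
  fix i assume h: "p \<noteq> [] \<and> hd p = u \<and> last p = w \<and> distinct p \<and> (\<forall>i. Suc i < length p \<longrightarrow> {p ! i, p ! Suc i} \<in> G)"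
    "v \<notin> set p" "{w, v} \<in> G" "Suc i < length (p @ [v])"
  show "{(p @ [v]) ! i, (p @ [v]) ! Suc i} \<in> G"
  proof (cases "Suc i < length p")
    case True thus ?thesis using h by (simp add: nth_append)
  next
    case False
    hence "Suc i = length p" using h by simp
    moreover have "p ! i = last p" using h \<open>Suc i = length p\<close> by (metis diff_Suc_1 last_conv_nth)
    ultimately show ?thesis using h by (simp add: nth_append)
  qed
qed auto

lemma conn_path: "conn G u v \<Longrightarrow> \<exists>p. is_path G p u v"
  unfolding conn_def
proof (induction rule: rtranclp_induct)
  case base thus ?case using is_path_single[of G u] by blast
next
  case (step w v)
  then obtain p where p: "is_path G p u w" by blast
  show ?case
  proof (cases "v \<in> set p")
    case True
    then obtain i where "i < length p" "p ! i = v" by (auto simp: in_set_conv_nth)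
    thus ?thesis using is_path_take[OF p] by metis
  next
    case False
    thus ?thesis using is_path_snoc[OF p False step(2)] by blast
  qed
qed

lemma path_conn: "is_path G p u v \<Longrightarrow> k < length p \<Longrightarrow> conn G u (p ! k)"
proof (induction k)
  case 0 thus ?case by (simp add: is_path_def hd_conv_nth[symmetric])
next
  case (Suc k)
  hence "conn G u (p ! k)" by simp
  moreover have "{p ! k, p ! Suc k} \<in> G" using Suc.prems by (simp add: is_path_def)
  ultimately show ?case by (blast intro: conn_trans conn_step)
qed

lemma path_conn_end: "is_path G p u v \<Longrightarrow> conn G u v"
proof -
  assume h: "is_path G p u v"
  hence "p \<noteq> []" "last p = v" by (auto simp: is_path_def)
  hence "v = p ! (length p - 1)" by (simp add: last_conv_nth)
  thus ?thesis using path_conn[OF h, of "length p - 1"] \<open>p \<noteq> []\<close> by simp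
qed

lemma path_edges_sub: "is_path G p u v \<Longrightarrow> path_edges p \<subseteq> G"
  by (auto simp: is_path_def path_edges_def)

lemma is_path_mono: "is_path G p u v \<Longrightarrow> path_edges p \<subseteq> G' \<Longrightarrow> is_path G' p u v"
  by (auto simp: is_path_def path_edges_def)


context
  fixes V :: "'v set" and E :: "'v set set"
  assumes tree: "is_tree V E"
begin

lemma finV: "finite V" using tree by (simp add: is_tree_def)

lemma edgeE: "e \<in> E \<Longrightarrow> \<exists>x y. x \<noteq> y \<and> x \<in> V \<and> y \<in> V \<and> e = {x, y}"
  using tree by (simp add: is_tree_def)

lemma E_Pow: "E \<subseteq> Pow V" using edgeE by blast

lemma finE: "finite E" by (rule finite_subset[OF E_Pow]) (simp add: finV)

lemma path_ex1: "u \<in> V \<Longrightarrow> v \<in> V \<Longrightarrow> \<exists>!p. is_path E p u v"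
  using tree by (simp add: is_tree_def)

lemma path_ex: "u \<in> V \<Longrightarrow> v \<in> V \<Longrightarrow> is_path E (THE p. is_path E p u v) u v"
  using path_ex1 by (rule theI')

lemma path_uniq: "u \<in> V \<Longrightarrow> v \<in> V \<Longrightarrow> is_path E p u v \<Longrightarrow> (THE p. is_path E p u v) = p"
  using path_ex1 by (blast intro: the1_equality)

lemma Epath_eq: "u \<in> V \<Longrightarrow> v \<in> V \<Longrightarrow> is_path E p u v \<Longrightarrow> E_path E u v = path_edges p"
  using path_uniq by (simp add: E_path_def)

lemma Epath_sub: "u \<in> V \<Longrightarrow> v \<in> V \<Longrightarrow> E_path E u v \<subseteq> E"
  unfolding E_path_def by (rule path_edges_sub[OF path_ex])

lemma conn_V: "conn G u x \<Longrightarrow> G \<subseteq> E \<Longrightarrow> u \<in> V \<Longrightarrow> x \<in> V"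
  unfolding conn_def
proof (induction rule: rtranclp_induct)
  case base thus ?case by simp
next
  case (step y z)
  hence "{y, z} \<in> E" by auto
  thus ?case using E_Pow by auto
qed

lemma cut: "u \<in> V \<Longrightarrow> v \<in> V \<Longrightarrow> e \<in> E_path E u v \<longleftrightarrow> e \<in> E \<and> \<not> conn (E - {e}) u v"
proof
  assume uv: "u \<in> V" "v \<in> V" and e: "e \<in> E_path E u v"
  have "e \<in> E" using e Epath_sub[OF uv] by auto
  moreover have "\<not> conn (E - {e}) u v"
  proof
    assume "conn (E - {e}) u v"
    from conn_path[OF this] obtain p where p: "is_path (E - {e}) p u v" by blast
    hence "is_path E p u v" by (rule is_path_mono) (use path_edges_sub[OF p] in auto)
    hence "E_path E u v = path_edges p" by (rule Epath_eq[OF uv])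
    with path_edges_sub[OF p] e show False by auto
  qed
  ultimately show "e \<in> E \<and> \<not> conn (E - {e}) u v" by simp
next
  assume uv: "u \<in> V" "v \<in> V" and h: "e \<in> E \<and> \<not> conn (E - {e}) u v"
  show "e \<in> E_path E u v"
  proof (rule ccontr)
    assume ne: "e \<notin> E_path E u v"
    let ?p = "THE p. is_path E p u v"
    have p: "is_path E ?p u v" using path_ex uv by blast
    have "path_edges ?p \<subseteq> E - {e}" using ne path_edges_sub[OF p] by (auto simp: E_path_def)
    hence "is_path (E - {e}) ?p u v" by (rule is_path_mono[OF p])
    hence "conn (E - {e}) u v" by (rule path_conn_end)
    with h show False by simp
  qed
qed

lemma conn_E: "u \<in> V \<Longrightarrow> v \<in> V \<Longrightarrow> conn E u v"
  by (rule path_conn_end[OF path_ex])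

lemma side:
  assumes "{p, q} \<in> E" "x \<in> V"
  shows "conn (E - {{p, q}}) x p \<or> conn (E - {{p, q}}) x q"
proof -
  let ?G = "E - {{p, q}}"
  have "p \<in> V" using assms(1) E_Pow by auto
  have gen: "conn E x y \<Longrightarrow> conn ?G x y \<or> conn ?G x p \<or> conn ?G x q" for y
    unfolding conn_def[of E]
  proof (induction rule: rtranclp_induct)
    case base thus ?case by simp
  next
    case (step y z)
    show ?case
    proof (cases "conn ?G x y")
      case True
      show ?thesis
      proof (cases "{y, z} = {p, q}")
        case True
        hence "y = p \<or> y = q" by (auto simp: doubleton_eq_iff)
        thus ?thesis using \<open>conn ?G x y\<close> by auto
      next
        case False
        hence "{y, z} \<in> ?G" using step(2) by auto
        hence "conn ?G x z" using conn_trans[OF True conn_step] by blast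
        thus ?thesis by simp
      qed
    next
      case False thus ?thesis using step(3) by simp
    qed
  qed
  from gen[OF conn_E[OF assms(2) \<open>p \<in> V\<close>]] show ?thesis by auto
qed

lemma edge_path:
  assumes "{p, q} \<in> E" "p \<noteq> q"
  shows "E_path E p q = {{p, q}}"
proof -
  have pq: "p \<in> V" "q \<in> V" using assms(1) E_Pow by auto
  have "is_path E [p, q] p q" using assms by (auto simp: is_path_def less_Suc_eq)
  hence "E_path E p q = path_edges [p, q]" by (rule Epath_eq[OF pq])
  also have "\<dots> = {{p, q}}" by (auto simp: path_edges_def less_Suc_eq)
  finally show ?thesis .
qed

lemma not_conn_edge:
  assumes "{p, q} \<in> E" "p \<noteq> q"
  shows "\<not> conn (E - {{p, q}}) p q"
proof -
  have pq: "p \<in> V" "q \<in> V" using assms(1) E_Pow by auto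
  have "{p, q} \<in> E_path E p q" using edge_path[OF assms] by simp
  thus ?thesis using cut[OF pq, of "{p, q}"] by simp
qed

lemma Epath_sym:
  assumes "u \<in> V" "v \<in> V" shows "E_path E u v = E_path E v u"
proof -
  show ?thesis
  proof (rule set_eqI)
    fix e
    have "conn (E - {e}) u v \<longleftrightarrow> conn (E - {e}) v u" using conn_sym[of "E - {e}" u v] conn_sym[of "E - {e}" v u] by (rule iffI)
    thus "e \<in> E_path E u v \<longleftrightarrow> e \<in> E_path E v u"
      unfolding cut[OF assms] cut[OF assms(2) assms(1)] by simp
  qed
qed

lemma xor:
  assumes "u \<in> V" "v \<in> V" "w \<in> V"
  shows "(e \<in> E_path E u w) = ((e \<in> E_path E u v) \<noteq> (e \<in> E_path E v w))"
proof (cases "e \<in> E")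
  case False
  have "e \<notin> E_path E u w" "e \<notin> E_path E u v" "e \<notin> E_path E v w"
    using Epath_sub[OF assms(1) assms(3)] Epath_sub[OF assms(1) assms(2)] Epath_sub[OF assms(2) assms(3)] False
    by auto
  thus ?thesis by simp
next
  case True
  from edgeE[OF True] obtain p q where pq: "p \<noteq> q" "p \<in> V" "q \<in> V" "e = {p, q}" by blast
  let ?G = "E - {e}"
  have npq: "\<not> conn ?G p q" using not_conn_edge[of p q] True pq by simp
  have key: "x \<in> V \<Longrightarrow> y \<in> V \<Longrightarrow> conn ?G x y \<longleftrightarrow> (conn ?G x p \<longleftrightarrow> conn ?G y p)" for x y
  proof -
    assume xy: "x \<in> V" "y \<in> V"
    have sE: "{p, q} \<in> E" using True pq by simp
    have sx: "conn ?G x p \<or> conn ?G x q" using side[OF sE xy(1)] pq(4) by simp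
    have sy: "conn ?G y p \<or> conn ?G y q" using side[OF sE xy(2)] pq(4) by simp
    show ?thesis
    proof
      assume "conn ?G x y"
      thus "conn ?G x p \<longleftrightarrow> conn ?G y p" by (meson conn_sym conn_trans)
    next
      assume "conn ?G x p \<longleftrightarrow> conn ?G y p"
      thus "conn ?G x y" using sx sy npq by (meson conn_sym conn_trans)
    qed
  qed
  have "e \<in> E_path E u w \<longleftrightarrow> \<not> conn ?G u w" using cut[OF assms(1) assms(3)] True by simp
  moreover have "e \<in> E_path E u v \<longleftrightarrow> \<not> conn ?G u v" using cut[OF assms(1) assms(2)] True by simp
  moreover have "e \<in> E_path E v w \<longleftrightarrow> \<not> conn ?G v w" using cut[OF assms(2) assms(3)] True by simp
  moreover note key[OF assms(1) assms(3)] key[OF assms(1) assms(2)] key[OF assms(2) assms(3)]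
  ultimately show ?thesis by blast
qed

lemma endpoints:
  assumes "G \<subseteq> E" "conn G u v" "u \<in> V" "v \<in> V" "e \<in> E_path E u v" "x \<in> e"
  shows "conn G u x"
proof -
  from conn_path[OF assms(2)] obtain p where p: "is_path G p u v" by blast
  have "is_path E p u v" using path_edges_sub[OF p] assms(1) by (intro is_path_mono[OF p]) auto
  hence "E_path E u v = path_edges p" by (rule Epath_eq[OF assms(3) assms(4)])
  then obtain i where i: "Suc i < length p" "e = {p ! i, p ! Suc i}"
    using assms(5) by (auto simp: path_edges_def)
  hence "x = p ! i \<or> x = p ! Suc i" using assms(6) by auto
  thus ?thesis using path_conn[OF p] i by auto
qed

lemma one_edge_at_end:
  assumes xv: "x \<in> V" "v \<in> V"
    and g1: "{v, z1} \<in> E_path E x v" and g2: "{v, z2} \<in> E_path E x v"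
    and "z1 \<noteq> v" "z2 \<noteq> v"
  shows "z1 = z2"
proof (rule ccontr)
  assume ne: "z1 \<noteq> z2"
  have inE: "{v, z1} \<in> E" "{v, z2} \<in> E" using g1 g2 Epath_sub xv by auto
  hence z: "z1 \<in> V" "z2 \<in> V" using E_Pow by auto
  have ep1: "E_path E v z1 = {{v, z1}}" using edge_path inE assms by auto
  have neq: "{v, z2} \<noteq> {v, z1}" using ne assms by (auto simp: doubleton_eq_iff)
  have "({v, z1} \<in> E_path E x z1) = (({v, z1} \<in> E_path E x v) \<noteq> ({v, z1} \<in> E_path E v z1))"
    by (rule xor) (use xv z in auto)
  hence n1: "{v, z1} \<notin> E_path E x z1" using g1 ep1 by simp
  have "({v, z2} \<in> E_path E x z1) = (({v, z2} \<in> E_path E x v) \<noteq> ({v, z2} \<in> E_path E v z1))"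
    by (rule xor) (use xv z in auto)
  hence n2: "{v, z2} \<in> E_path E x z1" using g2 ep1 neq by simp
  have c: "conn (E - {{v, z1}}) x z1" using n1 cut[OF xv(1) z(1)] inE by simp
  have "conn (E - {{v, z1}}) x v"
    by (rule endpoints[OF _ c xv(1) z(1) n2]) auto
  hence "conn (E - {{v, z1}}) v z1" using c by (meson conn_sym conn_trans)
  thus False using not_conn_edge[OF inE(1)] assms by auto
qed

end


lemma card_ge2_obtain:
  assumes h: "card S \<ge> 2" shows "\<exists>x y. x \<in> S \<and> y \<in> S \<and> x \<noteq> y"
proof -
  have fin: "finite S" using h card.infinite by force
  have "S \<noteq> {}" using h by auto
  then obtain x where x: "x \<in> S" by auto
  have c1: "card (S - {x}) \<ge> 1" using h fin x by (simp add: card_Diff_singleton)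
  have "S - {x} \<noteq> {}"
  proof
    assume "S - {x} = {}"
    with c1 show False by simp
  qed
  then obtain y where "y \<in> S - {x}" by auto
  thus ?thesis using x by auto
qed

context
  fixes V :: "'v set" and E :: "'v set set"
  assumes tree: "is_tree V E"
begin

lemma other_end: "e \<in> E \<Longrightarrow> v \<in> e \<Longrightarrow> \<exists>z. z \<noteq> v \<and> z \<in> V \<and> e = {v, z}"
  using edgeE[OF tree] by (metis insert_commute insertE singletonD)

lemma BR:
  assumes g: "{v, w} \<in> E" "v \<noteq> w" and x: "x \<in> V" and c: "conn (E - {{v, w}}) x w"
  shows "{v, w} \<in> E_path E x v"
    and "\<And>h. h \<in> E_path E x v \<Longrightarrow> h \<noteq> {v, w} \<Longrightarrow> v \<notin> h"
    and "\<And>h z. h \<in> E_path E x v \<Longrightarrow> h \<noteq> {v, w} \<Longrightarrow> z \<in> h \<Longrightarrow> conn (E - {{v, w}}) z w"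
proof -
  have vw: "v \<in> V" "w \<in> V" using g E_Pow[OF tree] by auto
  have nc: "\<not> conn (E - {{v, w}}) v w" by (rule not_conn_edge[OF tree g])
  have "\<not> conn (E - {{v, w}}) x v"
  proof
    assume "conn (E - {{v, w}}) x v"
    hence "conn (E - {{v, w}}) v x" by (rule conn_sym)
    hence "conn (E - {{v, w}}) v w" using c by (rule conn_trans)
    with nc show False ..
  qed
  thus i: "{v, w} \<in> E_path E x v" using cut[OF tree x vw(1)] g by simp
  show "v \<notin> h" if h: "h \<in> E_path E x v" "h \<noteq> {v, w}" for h
  proof
    assume "v \<in> h"
    have "h \<in> E" using h Epath_sub[OF tree x vw(1)] by auto
    then obtain z where z: "z \<noteq> v" "h = {v, z}" using other_end \<open>v \<in> h\<close> by blast
    have "w = z" by (rule one_edge_at_end[OF tree x vw(1) i]) (use h z g in auto)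
    with z h show False by simp
  qed
  show "conn (E - {{v, w}}) z w" if h: "h \<in> E_path E x v" "h \<noteq> {v, w}" "z \<in> h" for h z
  proof -
    have ew: "E_path E v w = {{v, w}}" by (rule edge_path[OF tree g])
    have "(h \<in> E_path E x w) = ((h \<in> E_path E x v) \<noteq> (h \<in> E_path E v w))"
      by (rule xor[OF tree x vw(1) vw(2)])
    hence hw: "h \<in> E_path E x w" using h ew by simp
    have "conn (E - {{v, w}}) x z" by (rule endpoints[OF tree _ c x vw(2) hw h(3)]) auto
    hence "conn (E - {{v, w}}) z x" by (rule conn_sym)
    thus ?thesis using c by (rule conn_trans)
  qed
qed

end

context
  fixes X V :: "'v set" and E :: "'v set set"
  assumes xt: "is_X_tree X V E"
begin

lemma tree: "is_tree V E" using xt by (simp add: is_X_tree_def)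

lemma leaves: "X = {v \<in> V. degree E v = 1}" using xt by (simp add: is_X_tree_def)

lemma no2: "v \<in> V \<Longrightarrow> degree E v \<noteq> 2" using xt by (simp add: is_X_tree_def)

lemma deg_pos: "e \<in> E \<Longrightarrow> v \<in> e \<Longrightarrow> degree E v \<noteq> 0"
  using finE[OF tree] by (auto simp: degree_def)

lemma two_edges:
  assumes "degree E v \<ge> 2"
  obtains e1 e2 where "e1 \<in> E" "e2 \<in> E" "v \<in> e1" "v \<in> e2" "e1 \<noteq> e2"
proof -
  let ?S = "{e \<in> E. v \<in> e}"
  have "card ?S \<ge> 2" using assms by (simp add: degree_def)
  then obtain e1 e2 where "e1 \<in> ?S" "e2 \<in> ?S" "e1 \<noteq> e2"
    using card_ge2_obtain by blast
  thus ?thesis using that by auto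
qed

lemma LEAF:
  assumes g: "{v, w} \<in> E" "v \<noteq> w"
  shows "\<exists>a\<in>X. conn (E - {{v, w}}) a w"
proof -
  let ?G = "E - {{v, w}}"
  let ?S = "{y \<in> V. conn ?G y w}"
  let ?h = "\<lambda>y. card (E_path E y v)"
  have vw: "v \<in> V" "w \<in> V" using g E_Pow[OF tree] by auto
  have finS: "finite ?S" using finV[OF tree] by simp
  have wS: "w \<in> ?S" using vw by simp
  define m where "m = Max (?h ` ?S)"
  have "m \<in> ?h ` ?S" unfolding m_def using finS wS by (intro Max_in) auto
  then obtain y where yS: "y \<in> ?S" and hy: "?h y = m" by blast
  have maxh: "\<And>z. z \<in> ?S \<Longrightarrow> ?h z \<le> ?h y" unfolding hy m_def using finS by simp
  have yV: "y \<in> V" and cy: "conn ?G y w" using yS by auto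
  have nc: "\<not> conn ?G v w" by (rule not_conn_edge[OF tree g])
  have yv: "y \<noteq> v" using cy nc by auto
  have d0: "degree E y \<noteq> 0"
  proof (cases "y = w")
    case True thus ?thesis using deg_pos g by auto
  next
    case False
    from cy[unfolded conn_def] show ?thesis
    proof (cases rule: converse_rtranclpE)
      case base with False show ?thesis by simp
    next
      case (step z)
      hence "{y, z} \<in> E" by simp
      thus ?thesis using deg_pos by auto
    qed
  qed
  have "degree E y = 1"
  proof (rule ccontr)
    assume d1: "degree E y \<noteq> 1"
    have "degree E y \<ge> 2" using d0 d1 no2[OF yV] by linarith
    then obtain e1 e2 where e: "e1 \<in> E" "e2 \<in> E" "y \<in> e1" "y \<in> e2" "e1 \<noteq> e2"
      by (rule two_edges)
    obtain z1 where z1: "z1 \<noteq> y" "z1 \<in> V" "e1 = {y, z1}" using other_end[OF tree e(1) e(3)] by blast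
    obtain z2 where z2: "z2 \<noteq> y" "z2 \<in> V" "e2 = {y, z2}" using other_end[OF tree e(2) e(4)] by blast
    have "z1 \<noteq> z2" using z1 z2 e by auto
    hence "\<not> (e1 \<in> E_path E v y \<and> e2 \<in> E_path E v y)"
      using one_edge_at_end[OF tree vw(1) yV, of z1 z2] z1 z2 by auto
    then obtain gg z where gg: "gg \<in> E" "gg = {y, z}" "z \<noteq> y" "z \<in> V" "gg \<notin> E_path E y v"
      using e z1 z2 Epath_sym[OF tree vw(1) yV] by blast
    have "gg \<noteq> {v, w}"
    proof
      assume eq: "gg = {v, w}"
      hence "y = w" "z = v" using gg yv by (auto simp: doubleton_eq_iff)
      hence "gg \<in> E_path E y v" using edge_path[OF tree, of w v] g gg eq by (simp add: insert_commute)
      with gg show False by simp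
    qed
    hence "gg \<in> ?G" using gg by simp
    hence "conn ?G z y" using gg(2) by (simp add: insert_commute conn_step)
    hence "conn ?G z w" using cy by (rule conn_trans)
    hence zS: "z \<in> ?S" using gg by simp
    have ezy: "E_path E z y = {gg}" using edge_path[OF tree, of z y] gg by (simp add: insert_commute)
    have "E_path E z v = insert gg (E_path E y v)"
    proof (rule set_eqI)
      fix e
      have "(e \<in> E_path E z v) = ((e \<in> E_path E z y) \<noteq> (e \<in> E_path E y v))"
        by (rule xor[OF tree gg(4) yV vw(1)])
      thus "e \<in> E_path E z v \<longleftrightarrow> e \<in> insert gg (E_path E y v)" using ezy gg(5) by auto
    qed
    moreover have "finite (E_path E y v)"
      using Epath_sub[OF tree yV vw(1)] finE[OF tree] finite_subset by auto
    ultimately have "?h z = ?h y + 1" using gg(5) by simp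
    with maxh[OF zS] show False by simp
  qed
  hence "y \<in> X" using yV leaves by simp
  thus ?thesis using cy by blast
qed

lemma AT:
  assumes "v \<in> V" "v \<notin> X" "e0 \<in> E" "v \<in> e0"
  shows "\<exists>z1 z2. {v, z1} \<in> E \<and> {v, z2} \<in> E \<and> z1 \<noteq> z2 \<and> z1 \<noteq> v \<and> z2 \<noteq> v \<and> {v, z1} \<noteq> e0 \<and> {v, z2} \<noteq> e0"
proof -
  let ?S = "{e \<in> E. v \<in> e}"
  have "degree E v \<noteq> 1" using assms leaves by auto
  moreover have "degree E v \<noteq> 0" using deg_pos assms by auto
  moreover have "degree E v \<noteq> 2" using no2 assms by auto
  ultimately have "card ?S \<ge> 3" by (simp add: degree_def)
  moreover have "finite ?S" using finE[OF tree] by simp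
  ultimately have "card (?S - {e0}) \<ge> 2" using assms by (simp add: card_Diff_singleton)
  then obtain e1 e2 where e: "e1 \<in> ?S - {e0}" "e2 \<in> ?S - {e0}" "e1 \<noteq> e2"
    using card_ge2_obtain by blast
  obtain z1 where z1: "z1 \<noteq> v" "e1 = {v, z1}" using other_end[OF tree, of e1 v] e by auto
  obtain z2 where z2: "z2 \<noteq> v" "e2 = {v, z2}" using other_end[OF tree, of e2 v] e by auto
  show ?thesis using e z1 z2 by (intro exI[of _ z1] exI[of _ z2]) auto
qed

end


context
  fixes V :: "'v set" and E :: "'v set set"
  assumes tree: "is_tree V E"
begin

lemma Epath_self: "u \<in> V \<Longrightarrow> E_path E u u = {}"
  using Epath_eq[OF tree, of u u "[u]"] is_path_single[of E u] by (simp add: path_edges_def)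

lemma SEP:
  assumes g1: "{v, w1} \<in> E" "v \<noteq> w1" and g2: "{v, w2} \<in> E" "v \<noteq> w2" and w: "w1 \<noteq> w2"
    and x: "x1 \<in> V" "x2 \<in> V"
    and c1: "conn (E - {{v, w1}}) x1 w1" and c2: "conn (E - {{v, w2}}) x2 w2"
    and e1: "e \<in> E_path E x1 v" and e2: "e \<in> E_path E x2 v"
  shows False
proof -
  have v: "v \<in> V" using g1 E_Pow[OF tree] by auto
  have ne: "{v, w1} \<noteq> {v, w2}" using w by (auto simp: doubleton_eq_iff)
  show False
  proof (cases "e = {v, w1}")
    case True
    hence "v \<notin> e" using BR(2)[OF tree g2 x(2) c2 e2] ne by simp
    with True show False by simp
  next
    case F1: False
    show False
    proof (cases "e = {v, w2}")
      case True
      hence "v \<notin> e" using BR(2)[OF tree g1 x(1) c1 e1] ne by simp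
      with True show False by simp
    next
      case F2: False
      have "e \<in> E" using e1 Epath_sub[OF tree x(1) v] by auto
      then obtain z z' where z: "z \<in> V" "e = {z, z'}" using edgeE[OF tree] by blast
      have "z \<in> e" using z by simp
      have cz1: "conn (E - {{v, w1}}) z w1" by (rule BR(3)[OF tree g1 x(1) c1 e1 F1 \<open>z \<in> e\<close>])
      have cz2: "conn (E - {{v, w2}}) z w2" by (rule BR(3)[OF tree g2 x(2) c2 e2 F2 \<open>z \<in> e\<close>])
      have i1: "{v, w1} \<in> E_path E z v" by (rule BR(1)[OF tree g1 z(1) cz1])
      have i2: "{v, w2} \<in> E_path E z v" by (rule BR(1)[OF tree g2 z(1) cz2])
      have "w1 = w2" by (rule one_edge_at_end[OF tree z(1) v i1 i2]) (use g1 g2 in auto)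
      with w show False by simp
    qed
  qed
qed

lemma CROSS:
  assumes f: "{p, q} \<in> E" "p \<noteq> q" and x: "x \<in> V" "y \<in> V"
    and fx: "{p, q} \<notin> E_path E x p" and fy: "{p, q} \<notin> E_path E y q"
    and e1: "e \<in> E_path E x p" and e2: "e \<in> E_path E y q"
  shows False
proof -
  let ?G = "E - {{p, q}}"
  have pq: "p \<in> V" "q \<in> V" using f E_Pow[OF tree] by auto
  have cx: "conn ?G x p" using fx cut[OF tree x(1) pq(1)] f by simp
  have cy: "conn ?G y q" using fy cut[OF tree x(2) pq(2)] f by simp
  have "e \<in> E" using e1 Epath_sub[OF tree x(1) pq(1)] by auto
  then obtain z z' where z: "e = {z, z'}" using edgeE[OF tree] by blast
  have "z \<in> e" using z by simp
  have "conn ?G x z" by (rule endpoints[OF tree _ cx x(1) pq(1) e1 \<open>z \<in> e\<close>]) auto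
  hence pz: "conn ?G p z" using conn_sym[OF cx] by (rule conn_trans[rotated])
  have "conn ?G y z" by (rule endpoints[OF tree _ cy x(2) pq(2) e2 \<open>z \<in> e\<close>]) auto
  hence "conn ?G z q" using cy by (rule conn_trans[OF conn_sym])
  hence "conn ?G p q" using pz by (rule conn_trans[rotated])
  thus False using not_conn_edge[OF tree f] by simp
qed

end

context
  fixes X V :: "'v set" and E :: "'v set set"
  assumes xt: "is_X_tree X V E"
begin

lemma XV: "X \<subseteq> V" using leaves[OF xt] by auto

lemma FOUR:
  assumes f: "f \<in> E" "f \<inter> X = {}"
  shows "\<exists>a b c d. a \<in> X \<and> b \<in> X \<and> c \<in> X \<and> d \<in> X \<and> a \<noteq> c \<and> b \<noteq> d \<and> a \<noteq> b \<and> c \<noteq> d \<and>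
    (\<forall>e. (if e \<in> E_path E a c then 1 else 0) + (if e \<in> E_path E b d then 1 else 0)
       - (if e \<in> E_path E a b then 1 else 0) - (if e \<in> E_path E c d then 1 else 0)
       = (if e = f then 2 else (0::real)))"
proof -
  have tr: "is_tree V E" by (rule tree[OF xt])
  obtain p q where pq: "p \<noteq> q" "p \<in> V" "q \<in> V" "f = {p, q}" using edgeE[OF tr f(1)] by blast
  have pX: "p \<notin> X" "q \<notin> X" using f(2) pq by auto
  obtain p1 p2 where P: "{p, p1} \<in> E" "{p, p2} \<in> E" "p1 \<noteq> p2" "p1 \<noteq> p" "p2 \<noteq> p" "{p, p1} \<noteq> f" "{p, p2} \<noteq> f"
    using AT[OF xt pq(2) pX(1) f(1)] pq by auto
  obtain q1 q2 where Q: "{q, q1} \<in> E" "{q, q2} \<in> E" "q1 \<noteq> q2" "q1 \<noteq> q" "q2 \<noteq> q" "{q, q1} \<noteq> f" "{q, q2} \<noteq> f"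
    using AT[OF xt pq(3) pX(2) f(1)] pq by auto
  obtain a where a: "a \<in> X" "conn (E - {{p, p1}}) a p1" using LEAF[OF xt P(1)] P by auto
  obtain b where b: "b \<in> X" "conn (E - {{p, p2}}) b p2" using LEAF[OF xt P(2)] P by auto
  obtain c where c: "c \<in> X" "conn (E - {{q, q1}}) c q1" using LEAF[OF xt Q(1)] Q by auto
  obtain d where d: "d \<in> X" "conn (E - {{q, q2}}) d q2" using LEAF[OF xt Q(2)] Q by auto
  have V: "a \<in> V" "b \<in> V" "c \<in> V" "d \<in> V" using a b c d XV by auto
  have fE: "{p, q} \<in> E" using f pq by simp
  have fa: "f \<notin> E_path E a p"
    using BR(2)[OF tr P(1) _ V(1) a(2), of f] P pq by auto
  have fb: "f \<notin> E_path E b p"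
    using BR(2)[OF tr P(2) _ V(2) b(2), of f] P pq by auto
  have fc: "f \<notin> E_path E c q"
    using BR(2)[OF tr Q(1) _ V(3) c(2), of f] Q pq by auto
  have fd: "f \<notin> E_path E d q"
    using BR(2)[OF tr Q(2) _ V(4) d(2), of f] Q pq by auto
  have epq: "E_path E p q = {f}" using edge_path[OF tr fE pq(1)] pq by simp
  have ab: "\<not> (e \<in> E_path E a p \<and> e \<in> E_path E b p)" for e
    using SEP[OF tr P(1) _ P(2) _ P(3) V(1) V(2) a(2) b(2), of e] P by auto
  have cd: "\<not> (e \<in> E_path E c q \<and> e \<in> E_path E d q)" for e
    using SEP[OF tr Q(1) _ Q(2) _ Q(3) V(3) V(4) c(2) d(2), of e] Q by auto
  have ac: "\<not> (e \<in> E_path E a p \<and> e \<in> E_path E c q)" for e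
    using CROSS[OF tr fE pq(1) V(1) V(3), of e] fa fc pq by auto
  have ad: "\<not> (e \<in> E_path E a p \<and> e \<in> E_path E d q)" for e
    using CROSS[OF tr fE pq(1) V(1) V(4), of e] fa fd pq by auto
  have bc: "\<not> (e \<in> E_path E b p \<and> e \<in> E_path E c q)" for e
    using CROSS[OF tr fE pq(1) V(2) V(3), of e] fb fc pq by auto
  have bd: "\<not> (e \<in> E_path E b p \<and> e \<in> E_path E d q)" for e
    using CROSS[OF tr fE pq(1) V(2) V(4), of e] fb fd pq by auto
  have Pac: "(e \<in> E_path E a c) = ((e \<in> E_path E a p) \<noteq> ((e = f) \<noteq> (e \<in> E_path E c q)))" for e
  proof -
    have "(e \<in> E_path E a c) = ((e \<in> E_path E a p) \<noteq> (e \<in> E_path E p c))" by (rule xor[OF tr V(1) pq(2) V(3)])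
    moreover have "(e \<in> E_path E p c) = ((e \<in> E_path E p q) \<noteq> (e \<in> E_path E q c))" by (rule xor[OF tr pq(2) pq(3) V(3)])
    moreover have "E_path E q c = E_path E c q" by (rule Epath_sym[OF tr pq(3) V(3)])
    ultimately show ?thesis using epq by simp
  qed
  have Pbd: "(e \<in> E_path E b d) = ((e \<in> E_path E b p) \<noteq> ((e = f) \<noteq> (e \<in> E_path E d q)))" for e
  proof -
    have "(e \<in> E_path E b d) = ((e \<in> E_path E b p) \<noteq> (e \<in> E_path E p d))" by (rule xor[OF tr V(2) pq(2) V(4)])
    moreover have "(e \<in> E_path E p d) = ((e \<in> E_path E p q) \<noteq> (e \<in> E_path E q d))" by (rule xor[OF tr pq(2) pq(3) V(4)])
    moreover have "E_path E q d = E_path E d q" by (rule Epath_sym[OF tr pq(3) V(4)])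
    ultimately show ?thesis using epq by simp
  qed
  have Pab: "(e \<in> E_path E a b) = ((e \<in> E_path E a p) \<noteq> (e \<in> E_path E b p))" for e
  proof -
    have "(e \<in> E_path E a b) = ((e \<in> E_path E a p) \<noteq> (e \<in> E_path E p b))" by (rule xor[OF tr V(1) pq(2) V(2)])
    moreover have "E_path E p b = E_path E b p" by (rule Epath_sym[OF tr pq(2) V(2)])
    ultimately show ?thesis by simp
  qed
  have Pcd: "(e \<in> E_path E c d) = ((e \<in> E_path E c q) \<noteq> (e \<in> E_path E d q))" for e
  proof -
    have "(e \<in> E_path E c d) = ((e \<in> E_path E c q) \<noteq> (e \<in> E_path E q d))" by (rule xor[OF tr V(3) pq(3) V(4)])
    moreover have "E_path E q d = E_path E d q" by (rule Epath_sym[OF tr pq(3) V(4)])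
    ultimately show ?thesis by simp
  qed
  have pp1a: "{p, p1} \<in> E_path E a p" by (rule BR(1)[OF tr P(1) _ V(1) a(2)]) (use P in auto)
  have pp2b: "{p, p2} \<in> E_path E b p" by (rule BR(1)[OF tr P(2) _ V(2) b(2)]) (use P in auto)
  have qq1c: "{q, q1} \<in> E_path E c q" by (rule BR(1)[OF tr Q(1) _ V(3) c(2)]) (use Q in auto)
  have "{p, p1} \<in> E_path E a c" using Pac[of "{p, p1}"] pp1a ac[of "{p, p1}"] P by auto
  hence ac_ne: "a \<noteq> c" using Epath_self[OF tr V(1)] by auto
  have "{p, p2} \<in> E_path E b d" using Pbd[of "{p, p2}"] pp2b bd[of "{p, p2}"] P by auto
  hence bd_ne: "b \<noteq> d" using Epath_self[OF tr V(2)] by auto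
  have "{p, p1} \<in> E_path E a b" using Pab[of "{p, p1}"] pp1a ab[of "{p, p1}"] by auto
  hence ab_ne: "a \<noteq> b" using Epath_self[OF tr V(1)] by auto
  have "{q, q1} \<in> E_path E c d" using Pcd[of "{q, q1}"] qq1c cd[of "{q, q1}"] by auto
  hence cd_ne: "c \<noteq> d" using Epath_self[OF tr V(3)] by auto
  have formula: "(if e \<in> E_path E a c then 1 else 0) + (if e \<in> E_path E b d then 1 else 0)
       - (if e \<in> E_path E a b then 1 else 0) - (if e \<in> E_path E c d then 1 else 0)
       = (if e = f then 2 else (0::real))" for e
  proof -
    note facts = Pac[of e] Pbd[of e] Pab[of e] Pcd[of e] ab[of e] cd[of e] ac[of e] ad[of e] bc[of e] bd[of e]
    show ?thesis
    proof (cases "e = f")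
      case True
      thus ?thesis using facts fa fb fc fd by simp
    next
      case False
      thus ?thesis using facts by (cases "e \<in> E_path E a p"; cases "e \<in> E_path E b p";
          cases "e \<in> E_path E c q"; cases "e \<in> E_path E d q") simp_all
    qed
  qed
  show ?thesis using a b c d ac_ne bd_ne ab_ne cd_ne formula by blast
qed

end


definition indv :: "('c \<Rightarrow> 'e set) \<Rightarrow> 'c \<Rightarrow> 'e \<Rightarrow> real" where
  "indv P c = (\<lambda>e. if e \<in> P c then 1 else 0)"

lemma lam_eq:
  assumes "finite E0" "P l \<subseteq> E0"
  shows "lam P l \<omega> = (\<Sum>e\<in>E0. \<omega> e * indv P l e)"
proof -
  have "(\<Sum>e\<in>E0. \<omega> e * indv P l e) = (\<Sum>e\<in>E0. if e \<in> P l then \<omega> e else 0)"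
    by (rule sum.cong) (auto simp: indv_def)
  also have "\<dots> = (\<Sum>e\<in>E0 \<inter> P l. \<omega> e)" using assms(1) by (simp add: sum.If_cases)
  also have "E0 \<inter> P l = P l" using assms(2) by auto
  finally show ?thesis by (simp add: lam_def)
qed

lemma LAM:
  assumes "finite E0" "\<forall>l\<in>L. P l \<subseteq> E0"
  shows "(\<Sum>l\<in>L. a l * lam P l \<omega>) = (\<Sum>e\<in>E0. \<omega> e * (\<Sum>l\<in>L. sc (a l) (indv P l)) e)"
proof -
  have "(\<Sum>l\<in>L. a l * lam P l \<omega>) = (\<Sum>l\<in>L. \<Sum>e\<in>E0. a l * (\<omega> e * indv P l e))"
    using lam_eq[OF assms(1)] assms(2) by (simp add: sum_distrib_left)
  also have "\<dots> = (\<Sum>e\<in>E0. \<Sum>l\<in>L. a l * (\<omega> e * indv P l e))" by (rule sum.swap)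
  also have "\<dots> = (\<Sum>e\<in>E0. \<omega> e * (\<Sum>l\<in>L. sc (a l) (indv P l)) e)"
    by (simp add: sum_fun_apply sc_apply sum_distrib_left algebra_simps)
  finally show ?thesis .
qed

lemma ZERO:
  fixes w :: "'e \<Rightarrow> real"
  assumes "finite E0" "\<forall>e. e \<notin> E0 \<longrightarrow> w e = 0"
  shows "(\<forall>\<omega>. (\<Sum>e\<in>E0. \<omega> e * w e) = 0) \<longleftrightarrow> w = 0"
proof
  assume h: "\<forall>\<omega>. (\<Sum>e\<in>E0. \<omega> e * w e) = 0"
  show "w = 0"
  proof
    fix e0
    show "w e0 = 0 e0"
    proof (cases "e0 \<in> E0")
      case True
      have "(\<Sum>e\<in>E0. (if e = e0 then 1 else 0) * w e) = 0"
        using spec[OF h, of "\<lambda>e. if e = e0 then 1 else 0"] by simp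
      moreover have "(\<Sum>e\<in>E0. (if e = e0 then 1 else 0) * w e) = (\<Sum>e\<in>E0. if e = e0 then w e else 0)"
        by (rule sum.cong) auto
      ultimately show ?thesis using True assms(1) by simp
    next
      case False thus ?thesis using assms(2) by simp
    qed
  qed
next
  assume "w = 0" thus "\<forall>\<omega>. (\<Sum>e\<in>E0. \<omega> e * w e) = 0" by simp
qed

lemma indv_out: "\<forall>l\<in>L. P l \<subseteq> E0 \<Longrightarrow> e \<notin> E0 \<Longrightarrow> (\<Sum>l\<in>L. sc (a l) (indv P l)) e = 0"
proof -
  assume h: "\<forall>l\<in>L. P l \<subseteq> E0" "e \<notin> E0"
  have "\<forall>l\<in>L. e \<notin> P l" using h by blast
  thus ?thesis by (simp add: sum_fun_apply sc_apply indv_def)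
qed

lemma indep_findep:
  assumes "finite E0" "\<forall>l\<in>L. P l \<subseteq> E0"
  shows "indep P L \<longleftrightarrow> findep (indv P) L"
proof -
  have "(\<forall>\<omega>. (\<Sum>l\<in>L. a l * lam P l \<omega>) = 0) \<longleftrightarrow> (\<Sum>l\<in>L. sc (a l) (indv P l)) = 0" for a
    unfolding LAM[OF assms]
    by (rule ZERO[OF assms(1)]) (use indv_out[OF assms(2)] in blast)
  thus ?thesis by (simp add: indep_def findep_def)
qed

lemma rho_pred:
  assumes "finite E0" "\<forall>l\<in>B. P l \<subseteq> E0" "P c \<subseteq> E0"
  shows "(\<forall>\<omega>. lam P c \<omega> = (\<Sum>b\<in>B. r b * lam P b \<omega>)) \<longleftrightarrow> indv P c = (\<Sum>b\<in>B. sc (r b) (indv P b))"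
proof -
  let ?w = "indv P c - (\<Sum>b\<in>B. sc (r b) (indv P b))"
  have eq: "lam P c \<omega> - (\<Sum>b\<in>B. r b * lam P b \<omega>) = (\<Sum>e\<in>E0. \<omega> e * ?w e)" for \<omega>
    unfolding LAM[OF assms(1,2)] lam_eq[of E0 P c, OF assms(1) assms(3)]
    by (simp add: algebra_simps sum_subtractf)
  have out: "\<forall>e. e \<notin> E0 \<longrightarrow> ?w e = 0"
  proof (intro allI impI)
    fix e assume e: "e \<notin> E0"
    have "(\<Sum>b\<in>B. sc (r b) (indv P b)) e = 0" by (rule indv_out[OF assms(2) e])
    moreover have "indv P c e = 0" using e assms(3) by (auto simp: indv_def)
    ultimately show "?w e = 0" by simp
  qed
  have "(\<forall>\<omega>. lam P c \<omega> = (\<Sum>b\<in>B. r b * lam P b \<omega>)) \<longleftrightarrow> (\<forall>\<omega>. lam P c \<omega> - (\<Sum>b\<in>B. r b * lam P b \<omega>) = 0)"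
    by simp
  also have "\<dots> \<longleftrightarrow> (\<forall>\<omega>. (\<Sum>e\<in>E0. \<omega> e * ?w e) = 0)"
    unfolding eq ..
  also have "\<dots> \<longleftrightarrow> ?w = 0" by (rule ZERO[OF assms(1) out])
  also have "\<dots> \<longleftrightarrow> indv P c = (\<Sum>b\<in>B. sc (r b) (indv P b))" by simp
  finally show ?thesis .
qed


lemma cp_sub:
  assumes tr: "is_tree V E" and cV: "c \<subseteq> V"
  shows "cord_path E c \<subseteq> E"
  unfolding cord_path_def
proof (rule Union_least)
  fix S assume "S \<in> {E_path E x y |x y. c = {x, y}}"
  then obtain x y where "S = E_path E x y" "c = {x, y}" by blast
  thus "S \<subseteq> E" using Epath_sub[OF tr, of x y] cV by auto
qed

lemma cp_pair:
  assumes tr: "is_tree V E" and xy: "x \<in> V" "y \<in> V"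
  shows "cord_path E {x, y} = E_path E x y"
proof
  show "cord_path E {x, y} \<subseteq> E_path E x y"
    unfolding cord_path_def
  proof (rule Union_least)
    fix S assume "S \<in> {E_path E x' y' |x' y'. {x, y} = {x', y'}}"
    then obtain x' y' where S: "S = E_path E x' y'" "{x, y} = {x', y'}" by blast
    hence "(x' = x \<and> y' = y) \<or> (x' = y \<and> y' = x)" by (auto simp: doubleton_eq_iff)
    thus "S \<subseteq> E_path E x y" using S Epath_sym[OF tr xy] by auto
  qed
next
  show "E_path E x y \<subseteq> cord_path E {x, y}" unfolding cord_path_def by blast
qed

lemma cords_V: "X \<subseteq> V \<Longrightarrow> c \<in> cords X \<Longrightarrow> c \<subseteq> V"
  by (auto simp: cords_def)

lemma finite_cords: "finite X \<Longrightarrow> finite (cords X)"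
  unfolding cords_def by (rule finite_subset[of _ "Pow X"]) auto

lemma pair_cord: "a \<in> X \<Longrightarrow> b \<in> X \<Longrightarrow> a \<noteq> b \<Longrightarrow> {a, b} \<in> cords X"
  by (auto simp: cords_def)

lemma bases_isbasis:
  assumes fin: "finite E0" and sub: "\<forall>c\<in>cords X. P c \<subseteq> E0"
  shows "bases X P = {A. isbasis (indv P) (cords X) A}"
proof -
  have eq: "L \<subseteq> cords X \<Longrightarrow> indep P L \<longleftrightarrow> findep (indv P) L" for L
    by (rule indep_findep[OF fin]) (use sub in blast)
  show ?thesis
  proof (rule set_eqI)
    fix A
    show "A \<in> bases X P \<longleftrightarrow> A \<in> {A. isbasis (indv P) (cords X) A}"
      unfolding bases_def isbasis_def mem_Collect_eq
    proof
      assume h: "A \<subseteq> cords X \<and> indep P A \<and> (\<forall>B'. A \<subseteq> B' \<and> B' \<subseteq> cords X \<and> indep P B' \<longrightarrow> B' = A)"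
      show "A \<subseteq> cords X \<and> findep (indv P) A \<and> (\<forall>A'. A \<subseteq> A' \<and> A' \<subseteq> cords X \<and> findep (indv P) A' \<longrightarrow> A' = A)"
        using h eq by blast
    next
      assume h: "A \<subseteq> cords X \<and> findep (indv P) A \<and> (\<forall>A'. A \<subseteq> A' \<and> A' \<subseteq> cords X \<and> findep (indv P) A' \<longrightarrow> A' = A)"
      show "A \<subseteq> cords X \<and> indep P A \<and> (\<forall>B'. A \<subseteq> B' \<and> B' \<subseteq> cords X \<and> indep P B' \<longrightarrow> B' = A)"
        using h eq by blast
    qed
  qed
qed

lemma rho_rhoA:
  assumes fin: "finite E0" and sub: "\<forall>c\<in>cords X. cord_path_contr E f c \<subseteq> E0"
    and B: "B \<subseteq> cords X" and c: "c \<in> cords X"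
  shows "rho E f B c = rhoA (indv (cord_path_contr E f)) B c"
proof -
  have "(\<forall>\<omega>. lam (cord_path_contr E f) c \<omega> = (\<Sum>b\<in>B. r b * lam (cord_path_contr E f) b \<omega>))
     \<longleftrightarrow> indv (cord_path_contr E f) c = (\<Sum>b\<in>B. sc (r b) (indv (cord_path_contr E f) b))" for r
    by (rule rho_pred[OF fin]) (use sub B c in auto)
  thus ?thesis unfolding rho_def rhoA_def by simp
qed

theorem mainTheorem2:
  fixes X V :: "'v set" and E :: "'v set set" and f :: "'v set"
  assumes "is_X_tree X V E" and "finite X" and "card X \<ge> 3"
    and "interior_edge X E f"
  shows "bases X (cord_path E) =
    {insert c B | c B. c \<in> cords X \<and> B \<in> bases X (cord_path_contr E f) \<and>
       (\<Sum>b\<in>B. rho E f B c b * delta E f b) \<noteq> delta E f c}"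
proof -
  note xt = assms(1)
  have tr: "is_tree V E" by (rule tree[OF xt])
  have XV: "X \<subseteq> V" by (rule XV[OF xt])
  have fE: "f \<in> E" "f \<inter> X = {}" using assms(4) by (auto simp: interior_edge_def)
  have finE: "finite E" by (rule finE[OF tr])
  let ?C = "cords X"
  let ?vT = "indv (cord_path E)"
  let ?vF = "indv (cord_path_contr E f)"
  have finC: "finite ?C" by (rule finite_cords[OF assms(2)])
  have sub1: "\<forall>c\<in>?C. cord_path E c \<subseteq> E" using cp_sub[OF tr] cords_V[OF XV] by blast
  have sub2: "\<forall>c\<in>?C. cord_path_contr E f c \<subseteq> E" using sub1 by (auto simp: cord_path_contr_def)
  have vF_eq: "?vF = (\<lambda>c. prj f (?vT c))"
    by (auto simp: fun_eq_iff indv_def prj_def cord_path_contr_def)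
  have delta_eq: "delta E f c = ?vT c f" for c by (simp add: delta_def indv_def)
  have uf: "ue f \<in> FV.span (?vT ` ?C)"
  proof -
    obtain a b c d where abcd: "a \<in> X" "b \<in> X" "c \<in> X" "d \<in> X" "a \<noteq> c" "b \<noteq> d" "a \<noteq> b" "c \<noteq> d"
      and form: "\<And>e. (if e \<in> E_path E a c then 1 else 0) + (if e \<in> E_path E b d then 1 else 0)
       - (if e \<in> E_path E a b then 1 else 0) - (if e \<in> E_path E c d then 1 else 0)
       = (if e = f then 2 else (0::real))"
      using FOUR[OF xt fE] by blast
    have V: "a \<in> V" "b \<in> V" "c \<in> V" "d \<in> V" using abcd XV by auto
    have iv: "?vT {x, y} = (\<lambda>e. if e \<in> E_path E x y then 1 else 0)" if "x \<in> V" "y \<in> V" for x y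
      using cp_pair[OF tr that] by (simp add: indv_def fun_eq_iff)
    have "ue f = sc (1/2) (?vT {a, c} + ?vT {b, d} - ?vT {a, b} - ?vT {c, d})"
    proof
      fix e
      have "ue f e = (1/2) * (if e = f then 2 else (0::real))" by (simp add: ue_def)
      also have "\<dots> = (1/2) * ((if e \<in> E_path E a c then 1 else 0) + (if e \<in> E_path E b d then 1 else 0)
       - (if e \<in> E_path E a b then 1 else 0) - (if e \<in> E_path E c d then 1 else 0))"
        by (simp only: form)
      also have "\<dots> = sc (1/2) (?vT {a, c} + ?vT {b, d} - ?vT {a, b} - ?vT {c, d}) e"
        by (simp add: sc_apply iv V)
      finally show "ue f e = sc (1/2) (?vT {a, c} + ?vT {b, d} - ?vT {a, b} - ?vT {c, d}) e" .
    qed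
    moreover have "?vT {a, c} \<in> FV.span (?vT ` ?C)" "?vT {b, d} \<in> FV.span (?vT ` ?C)"
      "?vT {a, b} \<in> FV.span (?vT ` ?C)" "?vT {c, d} \<in> FV.span (?vT ` ?C)"
      using abcd by (auto intro!: FV.span_base imageI pair_cord)
    ultimately show ?thesis by (metis FV.span_add FV.span_diff FV.span_scale)
  qed
  have main: "{A. isbasis ?vT ?C A} =
    {insert c B | c B. c \<in> ?C \<and> isbasis (\<lambda>c. prj f (?vT c)) ?C B \<and>
       (\<Sum>b\<in>B. rhoA (\<lambda>c. prj f (?vT c)) B c b * ?vT b f) \<noteq> ?vT c f}"
    by (rule abstract_main[OF finC uf])
  have b1: "bases X (cord_path E) = {A. isbasis ?vT ?C A}" by (rule bases_isbasis[OF finE sub1])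
  have b2: "bases X (cord_path_contr E f) = {A. isbasis ?vF ?C A}" by (rule bases_isbasis[OF finE sub2])
  have cond: "(c \<in> ?C \<and> isbasis (\<lambda>c. prj f (?vT c)) ?C B \<and>
       (\<Sum>b\<in>B. rhoA (\<lambda>c. prj f (?vT c)) B c b * ?vT b f) \<noteq> ?vT c f) \<longleftrightarrow>
     (c \<in> ?C \<and> B \<in> bases X (cord_path_contr E f) \<and>
       (\<Sum>b\<in>B. rho E f B c b * delta E f b) \<noteq> delta E f c)" for c B
  proof (cases "c \<in> ?C \<and> isbasis ?vF ?C B")
    case True
    hence "B \<subseteq> ?C" by (simp add: isbasis_def)
    hence "rho E f B c = rhoA ?vF B c" using rho_rhoA[OF finE sub2] True by blast
    thus ?thesis using True b2 vF_eq delta_eq by simp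
  next
    case False
    thus ?thesis using b2 vF_eq by auto
  qed
  show ?thesis unfolding b1 main using cond by simp
qed


end
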